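(* Let $\mu\in(0,1)$ and $\beta(a)=\frac{\mu}{1+a}$. Let $W(\tau,b)=C(\tau)(1-b)^{\mu-1}(1+e^{\tau}b)^{-\mu}$ for $\tau\ge0$, $b\in[0,1)$, with $C(\tau)>0$ such that $\int_0^1W(\tau,b)db=1$, let $\delta(\tau)=\frac{C'(\tau)}{C(\tau)^2}-\frac{\mu}{C(\tau)}$, $c(\tau)=e^{-\mu\tau}C(\tau)$, and $c_\infty=\lim_{\tau\to\infty}c(\tau)$ (which exists since $c$ is decreasing). Then for all $\tau\ge0$, $$-4e^{-(1-\mu)\tau}\le C(\tau)\delta(\tau)\le-\frac{c_\infty}{1+e^{-\tau}}e^{-(1-\mu)\tau}\le0.$$ *)

theory Defs
  imports "HOL-Analysis.Analysis"
begin

definition Wdens :: "real \<Rightarrow> real \<Rightarrow> real \<Rightarrow> real" where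
  "Wdens \<mu> \<tau> b = (1 - b) powr (\<mu> - 1) * (1 + exp \<tau> * b) powr (- \<mu>)"

definition Cn :: "real \<Rightarrow> real \<Rightarrow> real" where
  "Cn \<mu> \<tau> = 1 / integral {0..1} (Wdens \<mu> \<tau>)"

definition W :: "real \<Rightarrow> real \<Rightarrow> real \<Rightarrow> real" where
  "W \<mu> \<tau> b = Cn \<mu> \<tau> * Wdens \<mu> \<tau> b"

definition delta :: "real \<Rightarrow> real \<Rightarrow> real" where
  "delta \<mu> \<tau> = deriv (Cn \<mu>) \<tau> / (Cn \<mu> \<tau>)\<^sup>2 - \<mu> / Cn \<mu> \<tau>"

definition csmall :: "real \<Rightarrow> real \<Rightarrow> real" where
  "csmall \<mu> \<tau> = exp (- \<mu> * \<tau>) * Cn \<mu> \<tau>"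

definition cinf :: "real \<Rightarrow> real" where
  "cinf \<mu> = Lim at_top (csmall \<mu>)"

end

theory Submission
  imports Defs
begin

definition hh :: "real \<Rightarrow> real \<Rightarrow> real \<Rightarrow> real" where
  "hh mu t s = (1 + exp t * (1 - s powr (1/mu))) powr (-mu)"

lemma spow_le1: assumes "0 < mu" "s \<in> {0..1::real}" shows "0 \<le> s powr (1/mu) \<and> s powr (1/mu) \<le> 1"
  using assms by (auto intro: powr_le1)

lemma base_ge1: assumes "0 < mu" "s \<in> {0..1::real}" shows "1 \<le> 1 + exp t * (1 - s powr (1/mu))"
  using spow_le1[OF assms] by simp

lemma cont_spow: assumes "0 < mu" shows "continuous_on {0..1::real} (\<lambda>s. s powr (1/mu))"
  by (rule continuous_on_powr') (use assms in \<open>auto intro: continuous_intros\<close>)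

lemma cont_hh: assumes "0 < mu" shows "continuous_on {0..1} (hh mu t)"
proof -
  have c: "continuous_on {0..1} (\<lambda>s. 1 + exp t * (1 - s powr (1/mu)))"
    by (intro continuous_intros cont_spow assms)
  show ?thesis unfolding hh_def
    by (rule continuous_on_powr'[OF c continuous_on_const]) (use base_ge1[OF assms, of _ t] in \<open>fastforce\<close>)
qed

lemma subst: assumes "0 < mu" "mu < 1"
  shows "(Wdens mu t has_integral integral {0..1} (hh mu t) / mu) {0..1}"
proof -
  have "((\<lambda>x. (- (mu * (1-x) powr (mu-1))) *\<^sub>R hh mu t ((\<lambda>b. (1-b) powr mu) x)) has_integral
     (integral {(\<lambda>b. (1-b) powr mu) 0..(\<lambda>b. (1-b) powr mu) 1} (hh mu t) - integral {(\<lambda>b. (1-b) powr mu) 1..(\<lambda>b. (1-b) powr mu) 0} (hh mu t))) {0..1}"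
  proof (rule has_integral_substitution_general[where s="{1}" and c=0 and d=1])
    show "(\<lambda>b. (1 - b) powr mu) ` {0..1} \<subseteq> {0..1}" using assms by (auto intro!: powr_le1)
    show "continuous_on {0..1} (hh mu t)" by (rule cont_hh[OF assms(1)])
    show "continuous_on {0..1} (\<lambda>b. (1 - b) powr mu)"
      by (rule continuous_on_powr') (use assms in \<open>auto intro: continuous_intros\<close>)
    fix x assume x: "x \<in> {0..1::real} - {1}"
    then have "0 < 1 - x" by auto
    then show "((\<lambda>b. (1 - b) powr mu) has_field_derivative - (mu * (1 - x) powr (mu - 1))) (at x within {0..1})"
      by (auto intro!: derivative_eq_intros)
  qed auto
  moreover have "integral {(\<lambda>b. (1-b) powr mu) 0..(\<lambda>b. (1-b) powr mu) 1} (hh mu t) = 0"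
    using assms by simp
  moreover have "integral {(\<lambda>b. (1-b) powr mu) 1..(\<lambda>b. (1-b) powr mu) 0} (hh mu t) = integral {0..1} (hh mu t)"
    using assms by simp
  ultimately have H: "((\<lambda>x. (- (mu * (1-x) powr (mu-1))) *\<^sub>R hh mu t ((1-x) powr mu)) has_integral
     (- integral {0..1} (hh mu t))) {0..1}" by simp
  have eq: "Wdens mu t x = (-1/mu) * ((- (mu * (1-x) powr (mu-1))) *\<^sub>R hh mu t ((1-x) powr mu))"
    if "x \<in> {0..1}" for x
  proof (cases "x = 1")
    case True then show ?thesis using assms by (simp add: Wdens_def)
  next
    case False
    then have "0 < 1 - x" using that by auto
    then have "((1-x) powr mu) powr (1/mu) = 1 - x" using assms by (simp add: powr_powr)
    then show ?thesis using assms by (simp add: Wdens_def hh_def)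
  qed
  show ?thesis
    using has_integral_mult_right[OF H, of "-1/mu"] eq
    by (subst has_integral_cong[OF eq]) (auto simp: field_simps)
qed

definition Ih :: "real \<Rightarrow> real \<Rightarrow> real" where
  "Ih mu t = integral {0..1} (hh mu t)"

lemma hh_lower: assumes "0 < mu" "s \<in> {0..1}" shows "(1 + exp t) powr (-mu) \<le> hh mu t s"
proof -
  have le: "1 + exp t * (1 - s powr (1/mu)) \<le> 1 + exp t" using spow_le1[OF assms] by simp
  show ?thesis unfolding hh_def
    by (rule powr_mono2'[OF _ _ le]) (use assms base_ge1[OF assms, of t] in auto)
qed

lemma Ih_lower: assumes "0 < mu" shows "(1 + exp t) powr (-mu) \<le> Ih mu t"
proof -
  have "integral {0..1} (\<lambda>_::real. (1 + exp t) powr (-mu)) \<le> integral {0..1} (hh mu t)"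
    by (rule integral_le) (use hh_lower[OF assms] integrable_continuous_interval[OF cont_hh[OF assms]] in auto)
  then show ?thesis by (simp add: Ih_def)
qed

lemma Ih_pos: assumes "0 < mu" shows "0 < Ih mu t"
  using Ih_lower[OF assms, of t] by (smt (verit) powr_gt_zero exp_gt_zero)

lemma Cn_eq: assumes "0 < mu" "mu < 1" shows "Cn mu t = mu / Ih mu t"
  using integral_unique[OF subst[OF assms, of t]] assms unfolding Cn_def Ih_def by simp

lemma Cn_fun: assumes "0 < mu" "mu < 1" shows "Cn mu = (\<lambda>t. mu / Ih mu t)"
  using Cn_eq[OF assms] by auto

definition hd :: "real \<Rightarrow> real \<Rightarrow> real \<Rightarrow> real" where
  "hd mu t s = - mu * (1 + exp t * (1 - s powr (1/mu))) powr (-mu - 1) * (exp t * (1 - s powr (1/mu)))"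

lemma hh_deriv: assumes "0 < mu" "s \<in> {0..1}"
  shows "((\<lambda>t. hh mu t s) has_field_derivative hd mu t s) (at t within U)"
proof -
  define x where "x = 1 - s powr (1/mu)"
  have x: "0 \<le> x" using spow_le1[OF assms] by (simp add: x_def)
  have B: "0 < 1 + exp t * x" using x by (smt (verit) exp_gt_zero mult_nonneg_nonneg)
  have "((\<lambda>t. (1 + exp t * x) powr (-mu)) has_field_derivative
      (-mu) * (1 + exp t * x) powr (-mu - 1) * (exp t * x)) (at t within U)"
    using B by (auto intro!: derivative_eq_intros simp: powr_diff field_simps)
  then show ?thesis unfolding hh_def hd_def x_def by simp
qed

lemma cont_hd: assumes "0 < mu" shows "continuous_on (UNIV \<times> {0..1}) (\<lambda>(t, s). hd mu t s)"
proof -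
  have c1: "continuous_on (UNIV \<times> {0..1::real}) (\<lambda>p::real\<times>real. snd p powr (1/mu))"
    by (rule continuous_on_powr') (use assms in \<open>auto intro!: continuous_intros\<close>)
  have c2: "continuous_on (UNIV \<times> {0..1::real}) (\<lambda>p::real\<times>real. 1 + exp (fst p) * (1 - snd p powr (1/mu)))"
    by (intro continuous_intros c1)
  have c3: "continuous_on (UNIV \<times> {0..1::real}) (\<lambda>p::real\<times>real. (1 + exp (fst p) * (1 - snd p powr (1/mu))) powr (-mu - 1))"
    by (rule continuous_on_powr'[OF c2 continuous_on_const]) (use base_ge1[OF assms] in \<open>clarsimp, smt (verit) atLeastAtMost_iff\<close>)
  have "continuous_on (UNIV \<times> {0..1::real}) (\<lambda>p::real\<times>real. hd mu (fst p) (snd p))"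
    unfolding hd_def by (intro continuous_intros c1 c3)
  then show ?thesis by (simp add: case_prod_beta')
qed

lemma Ih_deriv: assumes "0 < mu" shows "(Ih mu has_field_derivative integral {0..1} (hd mu t)) (at t)"
proof -
  have "((\<lambda>t. integral (cbox 0 1) (hh mu t)) has_field_derivative integral (cbox 0 1) (hd mu t)) (at t within UNIV)"
    by (rule leibniz_rule_field_derivative)
      (use hh_deriv[OF assms] cont_hd[OF assms] integrable_continuous_interval[OF cont_hh[OF assms]] in auto)
  then show ?thesis by (simp add: Ih_def[abs_def])
qed

lemma key_int: fixes mu t :: real assumes "0 < mu" "mu < 1"
  shows "((\<lambda>s. (1 + exp t * (1 - s powr (1/mu))) powr (-mu - 1)) has_integral 1 / (1 + exp t)) {0..1}"
proof -
  define G where "G s = s * hh mu t s" for s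
  have cG: "continuous_on {0..1} G" unfolding G_def by (intro continuous_intros cont_hh assms)
  have dG: "(G has_vector_derivative (1 + exp t) * (1 + exp t * (1 - s powr (1/mu))) powr (-mu - 1)) (at s)"
    if s: "s \<in> {0<..<1}" for s
  proof -
    define B where "B = 1 + exp t * (1 - s powr (1/mu))"
    have B: "1 \<le> B" using base_ge1[OF assms(1), of s t] s unfolding B_def by auto
    have sp: "0 < s" using s by auto
    have d1: "((\<lambda>s. s powr (1/mu)) has_real_derivative (1/mu) * s powr (1/mu - 1)) (at s)"
      by (rule has_real_derivative_powr[OF sp])
    have d2: "((\<lambda>s. 1 + exp t * (1 - s powr (1/mu))) has_real_derivative
        exp t * (- ((1/mu) * s powr (1/mu - 1)))) (at s)"
      using d1 sp by (auto intro!: derivative_eq_intros)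
    have d3: "((\<lambda>s. (1 + exp t * (1 - s powr (1/mu))) powr (-mu)) has_real_derivative
        (-mu) * B powr (-mu - of_nat 1) * (exp t * (- ((1/mu) * s powr (1/mu - 1))))) (at s)"
      unfolding B_def by (rule DERIV_fun_powr[OF d2]) (use B B_def in simp)
    have d4: "(G has_real_derivative 1 * hh mu t s + ((-mu) * B powr (-mu - of_nat 1) * (exp t * (- ((1/mu) * s powr (1/mu - 1))))) * s) (at s)"
      unfolding G_def hh_def by (rule DERIV_mult[OF DERIV_ident d3])
    have "(G has_field_derivative
       hh mu t s + s * ((-mu) * B powr (-mu - 1) * (exp t * (- ((1/mu) * s powr (1/mu - 1)))))) (at s)"
      by (rule DERIV_cong[OF d4]) (simp add: field_simps)
    moreover have "hh mu t s + s * ((-mu) * B powr (-mu - 1) * (exp t * (- ((1/mu) * s powr (1/mu - 1)))))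
        = (1 + exp t) * B powr (-mu - 1)"
    proof -
      have e1: "s * s powr (1/mu - 1) = s powr (1/mu)" using sp by (simp add: powr_diff)
      have e2: "hh mu t s = B * B powr (-mu - 1)" using B unfolding hh_def B_def[symmetric]
        by (simp add: powr_diff powr_minus field_simps)
      have "hh mu t s + s * ((-mu) * B powr (-mu - 1) * (exp t * (- ((1/mu) * s powr (1/mu - 1)))))
          = B powr (-mu - 1) * (B + exp t * (s * s powr (1/mu - 1)))"
        using assms e2 by (simp add: field_simps)
      also have "\<dots> = (1 + exp t) * B powr (-mu - 1)" unfolding e1 B_def by (simp add: field_simps)
      finally show ?thesis .
    qed
    ultimately show ?thesis unfolding B_def by (simp add: has_real_derivative_iff_has_vector_derivative)
  qed
  have "((\<lambda>s. (1 + exp t) * (1 + exp t * (1 - s powr (1/mu))) powr (-mu - 1)) has_integral (G 1 - G 0)) {0..1}"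
    by (rule fundamental_theorem_of_calculus_interior[OF _ cG dG]) auto
  moreover have "G 1 - G 0 = 1" unfolding G_def hh_def by simp
  ultimately have "((\<lambda>s. (1 + exp t) * (1 + exp t * (1 - s powr (1/mu))) powr (-mu - 1)) has_integral 1) {0..1}"
    by simp
  from has_integral_mult_right[OF this, of "1 / (1 + exp t)"]
  have "((\<lambda>s. 1 / (1 + exp t) * ((1 + exp t) * (1 + exp t * (1 - s powr (1/mu))) powr (-mu - 1))) has_integral 1 / (1 + exp t)) {0..1}"
    by simp
  moreover have "(\<lambda>s. 1 / (1 + exp t) * ((1 + exp t) * (1 + exp t * (1 - s powr (1/mu))) powr (-mu - 1)))
      = (\<lambda>s. (1 + exp t * (1 - s powr (1/mu))) powr (-mu - 1))"
  proof (rule ext)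
    fix s
    have "1 + exp t \<noteq> 0" by (smt (verit) exp_gt_zero)
    then show "1 / (1 + exp t) * ((1 + exp t) * (1 + exp t * (1 - s powr (1/mu))) powr (-mu - 1))
      = (1 + exp t * (1 - s powr (1/mu))) powr (-mu - 1)" by (simp only: mult.assoc[symmetric]) simp
  qed
  ultimately show ?thesis by simp
qed

lemma cont_hd1: assumes "0 < mu" shows "continuous_on {0..1} (hd mu t)"
proof -
  have c1: "continuous_on ((\<lambda>s. (t, s)) ` {0..1}) (\<lambda>(t, s). hd mu t s)"
    by (rule continuous_on_subset[OF cont_hd[OF assms]]) auto
  have c0: "continuous_on {0..1} (\<lambda>s::real. (t, s))" by (intro continuous_intros)
  from continuous_on_compose[OF c0 c1] show ?thesis
    by (simp add: o_def)
qed

lemma delta_eq: fixes mu t :: real assumes "0 < mu" "mu < 1" shows "delta mu t = - 1 / (1 + exp t)"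
proof -
  define D where "D = integral {0..1} (hd mu t)"
  define I where "I = Ih mu t"
  have Ipos: "0 < I" using Ih_pos[OF assms(1)] by (simp add: I_def)
  have "((\<lambda>t. mu / Ih mu t) has_field_derivative - (mu * D) / (Ih mu t)\<^sup>2) (at t)"
    using Ih_deriv[OF assms(1), of t] Ih_pos[OF assms(1), of t] unfolding D_def
    by (auto intro!: derivative_eq_intros simp: power2_eq_square)
  then have dv: "deriv (Cn mu) t = - (mu * D) / I\<^sup>2"
    unfolding Cn_fun[OF assms] I_def by (rule DERIV_imp_deriv)
  have del: "delta mu t = - D / mu - I"
    unfolding delta_def dv Cn_eq[OF assms] I_def[symmetric] using Ipos assms
    by (simp add: field_simps power2_eq_square)
  have hD: "(hd mu t has_integral D) {0..1}"
    unfolding D_def by (rule integrable_integral[OF integrable_continuous_interval[OF cont_hd1[OF assms(1)]]])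
  have hI: "(hh mu t has_integral I) {0..1}"
    unfolding I_def Ih_def by (rule integrable_integral[OF integrable_continuous_interval[OF cont_hh[OF assms(1)]]])
  have comb: "((\<lambda>s. (-1/mu) * hd mu t s - hh mu t s) has_integral (-1/mu) * D - I) {0..1}"
    by (rule has_integral_diff[OF has_integral_mult_right[OF hD] hI])
  have eq: "(-1/mu) * hd mu t s - hh mu t s = - ((1 + exp t * (1 - s powr (1/mu))) powr (-mu - 1))"
    if s: "s \<in> {0..1}" for s
  proof -
    define B where "B = 1 + exp t * (1 - s powr (1/mu))"
    have B: "1 \<le> B" using base_ge1[OF assms(1) s, of t] unfolding B_def by auto
    have e2: "B powr (-mu) = B * B powr (-mu - 1)" using B
      by (simp add: powr_diff powr_minus field_simps)
    have "(-1/mu) * hd mu t s - hh mu t s = B powr (-mu - 1) * (exp t * (1 - s powr (1/mu)) - B)"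
      unfolding hd_def hh_def B_def[symmetric] e2 using assms by (simp add: field_simps)
    also have "\<dots> = - (B powr (-mu - 1))" unfolding B_def by simp
    finally show ?thesis unfolding B_def .
  qed
  have "((\<lambda>s. (-1/mu) * hd mu t s - hh mu t s) has_integral - (1 / (1 + exp t))) {0..1}"
    by (rule has_integral_cong[OF eq, THEN iffD2]) (auto intro: has_integral_neg key_int[OF assms])
  with comb have "(-1/mu) * D - I = - (1 / (1 + exp t))" by (rule has_integral_unique)
  then show ?thesis unfolding del by simp
qed

lemma mono_pt: fixes mu :: real assumes "0 < mu" "s \<in> {0..1}" "t1 \<le> t2"
  shows "exp (mu * t1) * hh mu t1 s \<le> exp (mu * t2) * hh mu t2 s"
proof -
  define x where "x = 1 - s powr (1/mu)"
  have x: "0 \<le> x" using spow_le1[OF assms(1,2)] by (simp add: x_def)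
  have r: "exp (mu * t) * hh mu t s = (exp (- t) + x) powr (-mu)" for t
  proof -
    have "1 + exp t * x = exp t * (exp (- t) + x)" by (simp add: field_simps exp_minus)
    then have "hh mu t s = exp t powr (-mu) * (exp (- t) + x) powr (-mu)"
      unfolding hh_def x_def[symmetric] using x by (simp add: powr_mult)
    moreover have "exp t powr (-mu) = exp (- (mu * t))" by (simp add: powr_def)
    ultimately show ?thesis by (simp add: exp_minus)
  qed
  have le: "exp (- t2) + x \<le> exp (- t1) + x" using assms(3) by simp
  have "(exp (- t1) + x) powr (-mu) \<le> (exp (- t2) + x) powr (-mu)"
    by (rule powr_mono2'[OF _ _ le]) (use assms x in \<open>auto intro: add_pos_nonneg\<close>)
  then show ?thesis unfolding r .
qed

lemma csmall_eq: assumes "0 < mu" "mu < 1"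
  shows "csmall mu t = mu / integral {0..1} (\<lambda>s. exp (mu * t) * hh mu t s)"
  unfolding csmall_def Cn_eq[OF assms] Ih_def integral_mult_right by (simp add: exp_minus field_simps)

lemma csmall_anti: assumes "0 < mu" "mu < 1" "t1 \<le> t2" shows "csmall mu t2 \<le> csmall mu t1"
proof -
  have int: "(\<lambda>s. exp (mu * t) * hh mu t s) integrable_on {0..1}" for t
    by (intro integrable_continuous_interval continuous_intros cont_hh assms)
  have J: "integral {0..1} (\<lambda>s. exp (mu * t1) * hh mu t1 s) \<le> integral {0..1} (\<lambda>s. exp (mu * t2) * hh mu t2 s)"
    by (rule integral_le[OF int int]) (use mono_pt[OF assms(1) _ assms(3)] in auto)
  have pos: "0 < integral {0..1} (\<lambda>s. exp (mu * t) * hh mu t s)" for t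
    using Ih_pos[OF assms(1), of t] unfolding Ih_def integral_mult_right by simp
  show ?thesis unfolding csmall_eq[OF assms(1,2)] using J pos[of t1] pos[of t2] assms(1)
    by (simp add: divide_left_mono mult_pos_pos frac_le)
qed

lemma csmall_pos: assumes "0 < mu" "mu < 1" shows "0 < csmall mu t"
  unfolding csmall_def Cn_eq[OF assms] using Ih_pos[OF assms(1), of t] assms by simp

lemma cinf_props: assumes "0 < mu" "mu < 1"
  shows "0 \<le> cinf mu \<and> cinf mu \<le> csmall mu t"
proof -
  define L where "L = Inf (range (csmall mu))"
  have bdd: "bdd_below (range (csmall mu))"
    using csmall_pos[OF assms] by (auto intro!: bdd_belowI[of _ 0] less_imp_le)
  have low: "L \<le> csmall mu t" for t unfolding L_def by (rule cInf_lower[OF _ bdd]) auto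
  have "(csmall mu \<longlongrightarrow> L) at_top"
  proof (rule decreasing_tendsto)
    show "\<forall>\<^sub>F n in at_top. L \<le> csmall mu n" using low by simp
    fix x assume "L < x"
    then obtain y where "y \<in> range (csmall mu)" "y < x"
      unfolding L_def using cInf_lessD[of "range (csmall mu)" x] by auto
    then obtain t0 where t0: "csmall mu t0 < x" by auto
    show "\<forall>\<^sub>F n in at_top. csmall mu n < x"
      unfolding eventually_at_top_linorder
      by (rule exI[of _ t0]) (use csmall_anti[OF assms] t0 in \<open>auto intro: le_less_trans\<close>)
  qed
  then have "cinf mu = L" unfolding cinf_def by (rule tendsto_Lim[rotated]) simp
  moreover have "0 \<le> L" unfolding L_def
    by (rule cInf_greatest) (use csmall_pos[OF assms] in \<open>auto intro: less_imp_le\<close>)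
  ultimately show ?thesis using low by simp
qed

theorem lemma6:
  fixes \<mu> \<tau> :: real
  assumes "0 < \<mu>" "\<mu> < 1" "0 \<le> \<tau>"
  shows "- 4 * exp (- (1 - \<mu>) * \<tau>) \<le> Cn \<mu> \<tau> * delta \<mu> \<tau>
       \<and> Cn \<mu> \<tau> * delta \<mu> \<tau> \<le> - (cinf \<mu> / (1 + exp (- \<tau>))) * exp (- (1 - \<mu>) * \<tau>)
       \<and> - (cinf \<mu> / (1 + exp (- \<tau>))) * exp (- (1 - \<mu>) * \<tau>) \<le> 0"
proof -
  define E where "E = exp \<tau>"
  define C where "C = Cn \<mu> \<tau>"
  have E1: "1 \<le> E" unfolding E_def using assms(3) by simp
  have CD: "Cn \<mu> \<tau> * delta \<mu> \<tau> = - C / (1 + E)"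
    unfolding delta_eq[OF assms(1,2)] C_def E_def by simp
  have Cpos: "0 < C" unfolding C_def Cn_eq[OF assms(1,2)] using Ih_pos[OF assms(1), of \<tau>] assms by simp
  have ex1: "exp (- (1 - \<mu>) * \<tau>) = exp (\<mu> * \<tau>) / E"
    unfolding E_def by (simp add: algebra_simps exp_diff)
  have ex2: "exp (- \<tau>) = 1 / E" unfolding E_def by (simp add: exp_minus inverse_eq_divide)
  have "C \<le> \<mu> * (1 + E) powr \<mu>"
  proof -
    have I: "(1 + E) powr (-\<mu>) \<le> Ih \<mu> \<tau>" using Ih_lower[OF assms(1), of \<tau>] by (simp add: E_def)
    have "C = \<mu> / Ih \<mu> \<tau>" unfolding C_def Cn_eq[OF assms(1,2)] ..
    also have "\<dots> \<le> \<mu> / (1 + E) powr (-\<mu>)"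
      by (rule divide_left_mono[OF I]) (use assms E1 Ih_pos[OF assms(1), of \<tau>] in auto)
    also have "\<dots> = \<mu> * (1 + E) powr \<mu>" using E1 by (simp add: powr_minus divide_inverse)
    finally show ?thesis .
  qed
  also have "\<dots> \<le> (1 + E) powr \<mu>" using assms(1,2) by (intro mult_left_le_one_le) auto
  also have "\<dots> \<le> (2 * E) powr \<mu>" by (rule powr_mono2) (use assms E1 in auto)
  also have "\<dots> = 2 powr \<mu> * exp (\<mu> * \<tau>)"
    using E1 by (simp add: powr_mult E_def powr_def ln_mult distrib_left exp_add)
  also have "\<dots> \<le> 2 * exp (\<mu> * \<tau>)"
  proof -
    have "2 powr \<mu> \<le> 2 powr 1" by (rule powr_mono) (use assms in auto)
    then show ?thesis by simp
  qed
  finally have Cup: "C \<le> 2 * exp (\<mu> * \<tau>)" .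
  have p1: "- 4 * exp (- (1 - \<mu>) * \<tau>) \<le> - C / (1 + E)"
  proof -
    have "C \<le> 4 * exp (\<mu> * \<tau>) * ((1 + E) / E)"
    proof -
      have "1 \<le> (1 + E) / E" using E1 by simp
      then have "4 * exp (\<mu> * \<tau>) * 1 \<le> 4 * exp (\<mu> * \<tau>) * ((1 + E) / E)"
        by (intro mult_left_mono) auto
      moreover have "0 < exp (\<mu> * \<tau>)" by simp
      ultimately show ?thesis using Cup by linarith
    qed
    then have "C / (1 + E) \<le> 4 * exp (\<mu> * \<tau>) / E" using E1 by (simp add: field_simps)
    then show ?thesis unfolding ex1 by simp
  qed
  have ci: "0 \<le> cinf \<mu>" "cinf \<mu> \<le> exp (- \<mu> * \<tau>) * C"
    using cinf_props[OF assms(1,2), of \<tau>] unfolding csmall_def C_def by auto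
  have "cinf \<mu> * exp (\<mu> * \<tau>) \<le> C"
  proof -
    have "cinf \<mu> * exp (\<mu> * \<tau>) \<le> exp (- \<mu> * \<tau>) * C * exp (\<mu> * \<tau>)"
      using ci(2) by (simp add: mult_right_mono)
    also have "\<dots> = C" by (simp add: exp_minus field_simps)
    finally show ?thesis .
  qed
  then have p2: "- C / (1 + E) \<le> - (cinf \<mu> / (1 + exp (- \<tau>))) * exp (- (1 - \<mu>) * \<tau>)"
    unfolding ex1 ex2 using E1 by (simp add: field_simps) (smt (verit) mult_left_mono[of "cinf \<mu> * exp (\<mu> * \<tau>)" C E] mult.commute)
  have p3: "- (cinf \<mu> / (1 + exp (- \<tau>))) * exp (- (1 - \<mu>) * \<tau>) \<le> 0"
    using ci(1) by (simp add: add_pos_pos)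
  show ?thesis unfolding CD using p1 p2 p3 by simp
qed

end
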